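(* Let $M\in\mathbb{R}_+^{p\times q}$ be a nonnegative matrix. Then $M$ is a slack matrix of a polyhedral cone if and only if $$\{x^TM : x\in\mathbb{R}_+^p\}=\{x^TM : x\in\mathbb{R}^p\}\cap\mathbb{R}_+^q,$$ i.e., the cone spanned by the rows of $M$ coincides with the set of nonnegative vectors in the row span of $M$.
   Context: $\mathbb{R}_+$ denotes the nonnegative reals. A matrix $S\in\mathbb{R}^{p\times q}$ is a slack matrix of a polyhedral cone $K\subseteq\mathbb{R}^n$ if there are matrices $A\in\mathbb{R}^{p\times n}$ and $B\in\mathbb{R}^{n\times q}$ with $K=\{x\in\mathbb{R}^n: x^TB\ge 0\}=\{y^TA: y\in\mathbb{R}_+^p\}$ (the columns of $B$ give an $\mathcal{H}$-representation and the rows of $A$ a $\mathcal{V}$-representation of $K$) and $S=AB$. A matrix is a slack matrix of a polyhedral cone if it is a slack matrix of some polyhedral cone $K$ (in some $\mathbb{R}^n$). *)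

theory Defs
  imports Complex_Main
begin

text \<open>Matrices are represented as functions nat => nat => real, with the
dimensions carried explicitly (only entries with indices below the dimensions
matter).\<close>

definition vecs :: "nat \<Rightarrow> (nat \<Rightarrow> real) set" where
  "vecs m = {x. \<forall>i\<ge>m. x i = 0}"

definition row_comb :: "nat \<Rightarrow> nat \<Rightarrow> (nat \<Rightarrow> nat \<Rightarrow> real) \<Rightarrow> (nat \<Rightarrow> real) \<Rightarrow> (nat \<Rightarrow> real)" where
  "row_comb p m A y = (\<lambda>j. if j < m then (\<Sum>i<p. y i * A i j) else 0)"

definition H_cone :: "nat \<Rightarrow> nat \<Rightarrow> (nat \<Rightarrow> nat \<Rightarrow> real) \<Rightarrow> (nat \<Rightarrow> real) set" where
  "H_cone n q B = {x \<in> vecs n. \<forall>j<q. (\<Sum>i<n. x i * B i j) \<ge> 0}"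

definition V_cone :: "nat \<Rightarrow> nat \<Rightarrow> (nat \<Rightarrow> nat \<Rightarrow> real) \<Rightarrow> (nat \<Rightarrow> real) set" where
  "V_cone p n A = {row_comb p n A y | y. \<forall>i<p. y i \<ge> 0}"

definition is_cone_slack_matrix :: "nat \<Rightarrow> nat \<Rightarrow> (nat \<Rightarrow> nat \<Rightarrow> real) \<Rightarrow> bool" where
  "is_cone_slack_matrix p q S \<longleftrightarrow>
     (\<exists>(n::nat) (A::nat \<Rightarrow> nat \<Rightarrow> real) (B::nat \<Rightarrow> nat \<Rightarrow> real) (K::(nat \<Rightarrow> real) set).
        K = H_cone n q B \<and> K = V_cone p n A \<and>
        (\<forall>i<p. \<forall>j<q. S i j = (\<Sum>k<n. A i k * B k j)))"

end

theory Submission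
  imports Defs
begin

lemma rc_assoc:
  assumes "\<forall>i<p. \<forall>j<q. M i j = (\<Sum>k<n. A i k * B k j)" "j < q"
  shows "(\<Sum>k<n. row_comb p n A y k * B k j) = (\<Sum>i<p. y i * M i j)"
proof -
  have "(\<Sum>k<n. row_comb p n A y k * B k j) = (\<Sum>k<n. \<Sum>i<p. y i * (A i k * B k j))"
    by (simp add: row_comb_def sum_distrib_right mult.assoc)
  also have "\<dots> = (\<Sum>i<p. \<Sum>k<n. y i * (A i k * B k j))"
    by (rule sum.swap)
  also have "\<dots> = (\<Sum>i<p. y i * M i j)"
    using assms by (simp add: sum_distrib_left)
  finally show ?thesis .
qed

lemma factor:
  fixes M :: "nat \<Rightarrow> nat \<Rightarrow> real"
  shows "\<exists>n A B. (\<forall>i<p. \<forall>j<q. M i j = (\<Sum>k<n. A i k * B k j)) \<and>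
     (\<forall>k<n. \<exists>c. \<forall>j<q. B k j = (\<Sum>i<p. c i * M i j)) \<and>
     (\<forall>x \<in> vecs n. (\<forall>j<q. (\<Sum>k<n. x k * B k j) = 0) \<longrightarrow> (\<forall>k. x k = 0))"
proof (induction p)
  case 0
  show ?case
    by (rule exI[of _ 0], auto simp: vecs_def)
next
  case (Suc p)
  then obtain n A B where
    h1: "\<forall>i<p. \<forall>j<q. M i j = (\<Sum>k<n. A i k * B k j)" and
    h2: "\<forall>k<n. \<exists>c. \<forall>j<q. B k j = (\<Sum>i<p. c i * M i j)" and
    h3: "\<forall>x \<in> vecs n. (\<forall>j<q. (\<Sum>k<n. x k * B k j) = 0) \<longrightarrow> (\<forall>k. x k = 0)"
    by blast
  have h2': "\<exists>c. \<forall>j<q. B k j = (\<Sum>i<Suc p. c i * M i j)" if kn: "k < n" for k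
  proof -
    obtain c where c: "\<forall>j<q. B k j = (\<Sum>i<p. c i * M i j)" using h2 kn by blast
    show ?thesis
      by (rule exI[of _ "c(p:=0)"]) (simp add: c)
  qed
  show ?case
  proof (cases "\<exists>c. \<forall>j<q. M p j = (\<Sum>k<n. c k * B k j)")
    case True
    then obtain c where c: "\<forall>j<q. M p j = (\<Sum>k<n. c k * B k j)" by blast
    show ?thesis
    proof (intro exI conjI)
      show "\<forall>i<Suc p. \<forall>j<q. M i j = (\<Sum>k<n. (A(p:=c)) i k * B k j)"
        using h1 c by (auto simp: less_Suc_eq)
      show "\<forall>k<n. \<exists>c. \<forall>j<q. B k j = (\<Sum>i<Suc p. c i * M i j)" using h2' by blast
      show "\<forall>x \<in> vecs n. (\<forall>j<q. (\<Sum>k<n. x k * B k j) = 0) \<longrightarrow> (\<forall>k. x k = 0)" by (rule h3)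
    qed
  next
    case False
    define A' where "A' = (\<lambda>i k. if i = p then (if k = n then 1 else 0) else (if k = n then 0 else A i k))"
    define B' where "B' = B(n := M p)"
    show ?thesis
    proof (intro exI conjI)
      show "\<forall>i<Suc p. \<forall>j<q. M i j = (\<Sum>k<Suc n. A' i k * B' k j)"
      proof (intro allI impI)
        fix i j assume i: "i < Suc p" and j: "j < q"
        have e: "(\<Sum>k<n. A' i k * B' k j) = (if i = p then 0 else (\<Sum>k<n. A i k * B k j))"
          by (auto simp: A'_def B'_def intro!: sum.cong)
        show "M i j = (\<Sum>k<Suc n. A' i k * B' k j)"
          using i j h1 by (simp add: e, auto simp: A'_def B'_def less_Suc_eq)
      qed
      show "\<forall>k<Suc n. \<exists>c. \<forall>j<q. B' k j = (\<Sum>i<Suc p. c i * M i j)"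
      proof (intro allI impI)
        fix k assume k: "k < Suc n"
        show "\<exists>c. \<forall>j<q. B' k j = (\<Sum>i<Suc p. c i * M i j)"
        proof (cases "k = n")
          case True
          have "\<forall>j<q. B' k j = (\<Sum>i<Suc p. (\<lambda>i. if i = p then 1 else 0) i * M i j)"
            by (simp add: True B'_def)
          then show ?thesis by (rule exI[of _ "\<lambda>i. if i = p then 1 else 0"])
        next
          case False
          then have "k < n" using k by simp
          then show ?thesis using h2' False by (simp add: B'_def)
        qed
      qed
      show "\<forall>x \<in> vecs (Suc n). (\<forall>j<q. (\<Sum>k<Suc n. x k * B' k j) = 0) \<longrightarrow> (\<forall>k. x k = 0)"
      proof (intro ballI impI)
        fix x assume x: "x \<in> vecs (Suc n)" and z: "\<forall>j<q. (\<Sum>k<Suc n. x k * B' k j) = 0"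
        have z': "\<forall>j<q. (\<Sum>k<n. x k * B k j) + x n * M p j = 0"
          using z by (simp add: B'_def)
        have xn: "x n = 0"
        proof (rule ccontr)
          assume ne: "x n \<noteq> 0"
          have "\<forall>j<q. M p j = (\<Sum>k<n. (- x k / x n) * B k j)"
          proof (intro allI impI)
            fix j assume "j < q"
            then have "(\<Sum>k<n. x k * B k j) + x n * M p j = 0" using z' by blast
            then have "M p j = - (\<Sum>k<n. x k * B k j) / x n" using ne
              by (simp add: field_simps)
            also have "\<dots> = (\<Sum>k<n. (- x k / x n) * B k j)"
              by (simp add: sum_divide_distrib sum_negf)
            finally show "M p j = (\<Sum>k<n. (- x k / x n) * B k j)" .
          qed
          then have "\<exists>c. \<forall>j<q. M p j = (\<Sum>k<n. c k * B k j)"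
            by (rule exI[of _ "\<lambda>k. - x k / x n"])
          with False show False by (rule notE)
        qed
        have "x \<in> vecs n" unfolding vecs_def
        proof (intro CollectI allI impI)
          fix i assume "n \<le> i"
          then have "i = n \<or> Suc n \<le> i" by linarith
          then show "x i = 0" using x xn unfolding vecs_def by auto
        qed
        moreover have "\<forall>j<q. (\<Sum>k<n. x k * B k j) = 0" using z' xn by simp
        ultimately show "\<forall>k. x k = 0" using h3 by blast
      qed
    qed
  qed
qed

theorem theorem2p1:
  fixes p q :: nat and M :: "nat \<Rightarrow> nat \<Rightarrow> real"
  assumes "\<forall>i<p. \<forall>j<q. M i j \<ge> 0"
  shows "is_cone_slack_matrix p q M \<longleftrightarrow>
         {row_comb p q M x | x. \<forall>i<p. x i \<ge> 0} =
         {row_comb p q M x | x. True} \<inter> {v. \<forall>j<q. v j \<ge> 0}"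
proof
  assume "is_cone_slack_matrix p q M"
  then obtain n A B where HV: "H_cone n q B = V_cone p n A"
    and MAB: "\<forall>i<p. \<forall>j<q. M i j = (\<Sum>k<n. A i k * B k j)"
    unfolding is_cone_slack_matrix_def by blast
  show "{row_comb p q M x | x. \<forall>i<p. x i \<ge> 0} =
         {row_comb p q M x | x. True} \<inter> {v. \<forall>j<q. v j \<ge> 0}"
  proof
    show "{row_comb p q M x | x. \<forall>i<p. x i \<ge> 0} \<subseteq>
         {row_comb p q M x | x. True} \<inter> {v. \<forall>j<q. v j \<ge> 0}"
      using assms by (auto simp: row_comb_def intro!: sum_nonneg)
  next
    show "{row_comb p q M x | x. True} \<inter> {v. \<forall>j<q. v j \<ge> 0} \<subseteq>
          {row_comb p q M x | x. \<forall>i<p. x i \<ge> 0}"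
    proof
      fix v assume "v \<in> {row_comb p q M x | x. True} \<inter> {v. \<forall>j<q. v j \<ge> 0}"
      then obtain x where v: "v = row_comb p q M x" and vn: "\<forall>j<q. v j \<ge> 0" by blast
      define u where "u = row_comb p n A x"
      have "u \<in> H_cone n q B"
        unfolding H_cone_def
      proof (intro CollectI conjI allI impI)
        show "u \<in> vecs n" by (simp add: u_def vecs_def row_comb_def)
        fix j assume j: "j < q"
        have "(\<Sum>k<n. u k * B k j) = (\<Sum>i<p. x i * M i j)"
          unfolding u_def by (rule rc_assoc[OF MAB j])
        also have "\<dots> = v j" using j v by (simp add: row_comb_def)
        finally show "(\<Sum>k<n. u k * B k j) \<ge> 0" using vn j by simp
      qed
      then have "u \<in> V_cone p n A" using HV by simp
      then obtain y where y: "u = row_comb p n A y" and yn: "\<forall>i<p. y i \<ge> 0"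
        unfolding V_cone_def by blast
      have "row_comb p q M y = v"
      proof
        fix j
        show "row_comb p q M y j = v j"
        proof (cases "j < q")
          case True
          have "(\<Sum>i<p. y i * M i j) = (\<Sum>k<n. u k * B k j)"
            unfolding y by (rule rc_assoc[OF MAB True, symmetric])
          also have "\<dots> = (\<Sum>i<p. x i * M i j)"
            unfolding u_def by (rule rc_assoc[OF MAB True])
          finally show ?thesis using True v by (simp add: row_comb_def)
        next
          case False
          then show ?thesis using v by (simp add: row_comb_def)
        qed
      qed
      then show "v \<in> {row_comb p q M x | x. \<forall>i<p. x i \<ge> 0}" using yn by blast
    qed
  qed
next
  assume E: "{row_comb p q M x | x. \<forall>i<p. x i \<ge> 0} =
         {row_comb p q M x | x. True} \<inter> {v. \<forall>j<q. v j \<ge> 0}"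
  obtain n A B where
    h1: "\<forall>i<p. \<forall>j<q. M i j = (\<Sum>k<n. A i k * B k j)" and
    h2: "\<forall>k<n. \<exists>c. \<forall>j<q. B k j = (\<Sum>i<p. c i * M i j)" and
    h3: "\<forall>x \<in> vecs n. (\<forall>j<q. (\<Sum>k<n. x k * B k j) = 0) \<longrightarrow> (\<forall>k. x k = 0)"
    using factor[of p q M] by blast
  from h2 obtain C where C: "\<forall>k<n. \<forall>j<q. B k j = (\<Sum>i<p. C k i * M i j)"
    by metis
  have "H_cone n q B = V_cone p n A"
  proof
    show "V_cone p n A \<subseteq> H_cone n q B"
    proof
      fix u assume "u \<in> V_cone p n A"
      then obtain y where y: "u = row_comb p n A y" and yn: "\<forall>i<p. y i \<ge> 0"
        unfolding V_cone_def by blast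
      show "u \<in> H_cone n q B"
        unfolding H_cone_def
      proof (intro CollectI conjI allI impI)
        show "u \<in> vecs n" by (simp add: y vecs_def row_comb_def)
        fix j assume j: "j < q"
        have "(\<Sum>k<n. u k * B k j) = (\<Sum>i<p. y i * M i j)"
          unfolding y by (rule rc_assoc[OF h1 j])
        also have "\<dots> \<ge> 0" using yn assms j by (auto intro!: sum_nonneg)
        finally show "(\<Sum>k<n. u k * B k j) \<ge> 0" .
      qed
    qed
  next
    show "H_cone n q B \<subseteq> V_cone p n A"
    proof
      fix x assume "x \<in> H_cone n q B"
      then have xv: "x \<in> vecs n" and xn: "\<forall>j<q. (\<Sum>k<n. x k * B k j) \<ge> 0"
        unfolding H_cone_def by auto
      define w where "w = (\<lambda>i. \<Sum>k<n. x k * C k i)"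
      have wM: "(\<Sum>i<p. w i * M i j) = (\<Sum>k<n. x k * B k j)" if j: "j < q" for j
      proof -
        have "(\<Sum>i<p. w i * M i j) = (\<Sum>i<p. \<Sum>k<n. x k * (C k i * M i j))"
          by (simp add: w_def sum_distrib_right mult.assoc)
        also have "\<dots> = (\<Sum>k<n. \<Sum>i<p. x k * (C k i * M i j))" by (rule sum.swap)
        also have "\<dots> = (\<Sum>k<n. x k * B k j)"
          using C j by (simp add: sum_distrib_left)
        finally show ?thesis .
      qed
      have "row_comb p q M w \<in> {row_comb p q M x | x. True} \<inter> {v. \<forall>j<q. v j \<ge> 0}"
        using wM xn by (auto simp: row_comb_def)
      then have "row_comb p q M w \<in> {row_comb p q M x | x. \<forall>i<p. x i \<ge> 0}" using E by simp
      then obtain y where y: "row_comb p q M w = row_comb p q M y" and yn: "\<forall>i<p. y i \<ge> 0"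
        by blast
      define z where "z = row_comb p n A y"
      have d1: "(\<lambda>k. x k - z k) \<in> vecs n" using xv by (simp add: vecs_def z_def row_comb_def)
      have d2: "\<forall>j<q. (\<Sum>k<n. (\<lambda>k. x k - z k) k * B k j) = 0"
      proof (intro allI impI)
        fix j assume j: "j < q"
        have "(\<Sum>k<n. z k * B k j) = (\<Sum>i<p. y i * M i j)"
          unfolding z_def by (rule rc_assoc[OF h1 j])
        also have "\<dots> = (\<Sum>i<p. w i * M i j)"
          using fun_cong[OF y, of j] j by (simp add: row_comb_def)
        also have "\<dots> = (\<Sum>k<n. x k * B k j)" by (rule wM[OF j])
        finally show "(\<Sum>k<n. (\<lambda>k. x k - z k) k * B k j) = 0"
          by (simp add: left_diff_distrib sum_subtractf)
      qed
      have "\<forall>k. (\<lambda>k. x k - z k) k = 0" by (rule mp[OF bspec[OF h3 d1] d2])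
      then have "x = z" by (intro ext) (metis eq_iff_diff_eq_0)
      then have "\<exists>y. x = row_comb p n A y \<and> (\<forall>i<p. 0 \<le> y i)"
        by (intro exI[of _ y]) (simp add: z_def yn)
      then show "x \<in> V_cone p n A" unfolding V_cone_def by simp
    qed
  qed
  then have HV2: "H_cone n q B = V_cone p n A" .
  show "is_cone_slack_matrix p q M"
    unfolding is_cone_slack_matrix_def
    by (rule exI[of _ n], rule exI[of _ A], rule exI[of _ B], rule exI[of _ "H_cone n q B"],
        intro conjI refl HV2 h1)
qed

end
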